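(* Let $(X,\tau)$ be a $\sigma$-compact Hausdorff space. The following are equivalent: (1) $X$ has the property $\textsf{S}_1(\mathcal{O},\mathcal{O})$; (2) TWO has a winning strategy in the game ${\sf G}_1(\mathcal{O},\mathcal{O})$.
   Context: $\sigma$-compact: a countable union of compact subsets. $\mathcal{O}$: open covers of $X$. $\textsf{S}_1(\mathcal{O},\mathcal{O})$: for every sequence $(\mathcal{U}_n)$ of open covers there are $U_n\in\mathcal{U}_n$ with $\{U_n:n\in\mathbb{N}\}$ covering $X$. Game ${\sf G}_1(\mathcal{O},\mathcal{O})$: in inning $n\in\mathbb{N}$ ONE chooses an open cover $O_n$ of $X$, TWO responds with $T_n\in O_n$; TWO wins if $\{T_n:n\in\mathbb{N}\}$ covers $X$, otherwise ONE wins. *)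

theory Defs
  imports "HOL-Analysis.Analysis"
begin

definition open_cover :: "'a topology \<Rightarrow> 'a set set \<Rightarrow> bool" where
  "open_cover X \<U> \<longleftrightarrow> (\<forall>U\<in>\<U>. openin X U) \<and> \<Union>\<U> = topspace X"

definition sigma_compact_space :: "'a topology \<Rightarrow> bool" where
  "sigma_compact_space X \<longleftrightarrow>
     (\<exists>K :: nat \<Rightarrow> 'a set. (\<forall>n. compactin X (K n)) \<and> (\<Union>n. K n) = topspace X)"

definition S1_OO :: "'a topology \<Rightarrow> bool" where
  "S1_OO X \<longleftrightarrow>
     (\<forall>\<U> :: nat \<Rightarrow> 'a set set. (\<forall>n. open_cover X (\<U> n)) \<longrightarrow>
        (\<exists>U :: nat \<Rightarrow> 'a set. (\<forall>n. U n \<in> \<U> n) \<and> open_cover X (range U)))"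

text \<open>A strategy for TWO in G_1(O,O) maps the finite history of ONE's moves
  (O_1,...,O_n) (TWO's earlier moves being determined by the strategy itself) to
  TWO's response T_n, which must be a member of the last cover O_n.\<close>
definition TWO_strategy_G1_OO :: "'a topology \<Rightarrow> ('a set set list \<Rightarrow> 'a set) \<Rightarrow> bool" where
  "TWO_strategy_G1_OO X \<sigma> \<longleftrightarrow>
     (\<forall>os. os \<noteq> [] \<and> (\<forall>C\<in>set os. open_cover X C) \<longrightarrow> \<sigma> os \<in> last os)"

definition TWO_winning_G1_OO :: "'a topology \<Rightarrow> ('a set set list \<Rightarrow> 'a set) \<Rightarrow> bool" where
  "TWO_winning_G1_OO X \<sigma> \<longleftrightarrow>
     TWO_strategy_G1_OO X \<sigma> \<and>
     (\<forall>\<O> :: nat \<Rightarrow> 'a set set. (\<forall>n. open_cover X (\<O> n)) \<longrightarrow>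
        (\<Union>n. \<sigma> (map \<O> [0..<Suc n])) = topspace X)"

definition TWO_has_winning_strategy_G1_OO :: "'a topology \<Rightarrow> bool" where
  "TWO_has_winning_strategy_G1_OO X \<longleftrightarrow> (\<exists>\<sigma>. TWO_winning_G1_OO X \<sigma>)"

end

theory Submission imports Defs "HOL-Library.Nat_Bijection" begin

definition valid_st :: "'a topology \<Rightarrow> ('a set set list \<Rightarrow> 'a set) \<Rightarrow> bool" where
  "valid_st X \<sigma> \<longleftrightarrow> (\<forall>os. os \<noteq> [] \<and> (\<forall>C\<in>set os. open_cover X C) \<longrightarrow> \<sigma> os \<in> last os)"

definition good :: "'a topology \<Rightarrow> 'a set \<Rightarrow> bool" where
  "good X A \<longleftrightarrow> (\<exists>\<sigma>. valid_st X \<sigma> \<and> (\<forall>\<O>. (\<forall>n. open_cover X (\<O> n)) \<longrightarrow>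
       A \<subseteq> (\<Union>n. \<sigma> (map \<O> [0..<Suc n]))))"

lemma good_mono: "good X B \<Longrightarrow> A \<subseteq> B \<Longrightarrow> good X A"
  unfolding good_def by blast

lemma good_empty:
  assumes "topspace X \<noteq> {}" shows "good X {}"
proof -
  have "valid_st X (\<lambda>os. SOME U. U \<in> last os)"
    unfolding valid_st_def
  proof (intro allI impI)
    fix os :: "'a set set list" assume h: "os \<noteq> [] \<and> (\<forall>C\<in>set os. open_cover X C)"
    then have "open_cover X (last os)" by simp
    then have "\<Union>(last os) = topspace X" unfolding open_cover_def by auto
    then have "last os \<noteq> {}" using assms by (metis Union_empty)
    then show "(SOME U. U \<in> last os) \<in> last os" by (meson ex_in_conv someI_ex)
  qed
  then show ?thesis unfolding good_def by blast
qed

lemma prod_encode_mono2: "j \<le> k \<Longrightarrow> prod_encode (i, j) \<le> prod_encode (i, k)"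
proof -
  assume "j \<le> k"
  then have "(i+j) * Suc (i+j) \<le> (i+k) * Suc (i+k)" by (intro mult_le_mono) auto
  then have "triangle (i+j) \<le> triangle (i+k)" unfolding triangle_def by (rule div_le_mono)
  then show ?thesis unfolding prod_encode_def by simp
qed

lemma good_Union:
  assumes "\<And>i::nat. good X (A i)" shows "good X (\<Union>i. A i)"
proof -
  obtain s where s: "\<And>i. valid_st X (s i)"
    "\<And>i \<O>. (\<forall>n. open_cover X (\<O> n)) \<Longrightarrow> A i \<subseteq> (\<Union>n. s i (map \<O> [0..<Suc n]))"
    using assms unfolding good_def by metis
  define \<sigma> where "\<sigma> os = (case prod_decode (length os - 1) of (i,k) \<Rightarrow>
      s i (map (\<lambda>j. os ! prod_encode (i,j)) [0..<Suc k]))" for os :: "'a set set list"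
  have "valid_st X \<sigma>" unfolding valid_st_def
  proof (intro allI impI)
    fix os :: "'a set set list" assume h: "os \<noteq> [] \<and> (\<forall>C\<in>set os. open_cover X C)"
    obtain i k where ik: "prod_decode (length os - 1) = (i,k)" by fastforce
    have e: "prod_encode (i,k) = length os - 1" by (metis ik prod_decode_inverse)
    have lt: "prod_encode (i,j) < length os" if "j \<le> k" for j
      using prod_encode_mono2[OF that, of i] e h by (cases os) auto
    let ?l = "map (\<lambda>j. os ! prod_encode (i,j)) [0..<Suc k]"
    have "\<forall>C\<in>set ?l. open_cover X C" using h lt by auto
    then have "s i ?l \<in> last ?l" using s(1)[of i, unfolded valid_st_def, rule_format, of ?l]
      by (simp del: upt_Suc)
    moreover have "last ?l = last os" using e h by (simp add: last_conv_nth)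
    ultimately show "\<sigma> os \<in> last os" unfolding \<sigma>_def ik by simp
  qed
  moreover have "(\<Union>i. A i) \<subseteq> (\<Union>n. \<sigma> (map \<O> [0..<Suc n]))" if HO: "\<forall>n. open_cover X (\<O> n)" for \<O>
  proof
    fix x assume "x \<in> (\<Union>i. A i)"
    then obtain i where "x \<in> A i" by blast
    moreover have "\<forall>n. open_cover X (\<O> (prod_encode (i,n)))" using HO by blast
    ultimately obtain k where k: "x \<in> s i (map (\<lambda>n. \<O> (prod_encode (i,n))) [0..<Suc k])"
      using s(2)[of "\<lambda>n. \<O> (prod_encode (i,n))" i] by blast
    define n where "n = prod_encode (i,k)"
    have dn: "prod_decode (length (map \<O> [0..<Suc n]) - 1) = (i,k)" by (simp add: n_def)
    have "map (\<lambda>j. map \<O> [0..<Suc n] ! prod_encode (i,j)) [0..<Suc k]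
          = map (\<lambda>n. \<O> (prod_encode (i,n))) [0..<Suc k]" (is "?a = ?b")
    proof (rule map_cong[OF refl])
      fix j assume "j \<in> set [0..<Suc k]"
      then have "prod_encode (i,j) \<le> n" using prod_encode_mono2 n_def by auto
      then show "map \<O> [0..<Suc n] ! prod_encode (i,j) = \<O> (prod_encode (i,j))"
        by (simp del: upt_Suc add: nth_map_upt)
    qed
    then have "\<sigma> (map \<O> [0..<Suc n]) = s i (map (\<lambda>n. \<O> (prod_encode (i,n))) [0..<Suc k])"
      unfolding \<sigma>_def dn prod.case by (rule arg_cong[where f="s i"])
    with k show "x \<in> (\<Union>n. \<sigma> (map \<O> [0..<Suc n]))" by blast
  qed
  ultimately show ?thesis unfolding good_def by blast
qed

lemma good_Un: "good X A \<Longrightarrow> good X B \<Longrightarrow> good X (A \<union> B)"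
proof -
  assume a: "good X A" "good X B"
  have "good X (\<Union>i. if i = (0::nat) then A else B)"
    by (rule good_Union) (use a in simp)
  moreover have "A \<union> B \<subseteq> (\<Union>i. if i = (0::nat) then A else B)"
  proof
    fix x assume "x \<in> A \<union> B"
    then show "x \<in> (\<Union>i. if i = (0::nat) then A else B)"
    proof
      assume "x \<in> A" then show ?thesis by (intro UN_I[of 0]) auto
    next
      assume "x \<in> B" then show ?thesis by (intro UN_I[of 1]) auto
    qed
  qed
  ultimately show ?thesis by (rule good_mono)
qed

lemma good_finite_Union:
  assumes "topspace X \<noteq> {}" "finite F" "\<And>A. A \<in> F \<Longrightarrow> good X A" shows "good X (\<Union>F)"
  using assms(2,3) by (induction rule: finite_induct) (auto simp: good_empty[OF assms(1)] good_Un)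

lemma map_upt_shift: "map f [0..<Suc n] = f 0 # map (\<lambda>i. f (Suc i)) [0..<n]"
  by (induction n) auto

lemma good_step:
  assumes x: "x \<in> topspace X" and h: "\<And>U. openin X U \<Longrightarrow> x \<in> U \<Longrightarrow> good X (A - U)"
  shows "good X A"
proof -
  define pick where "pick Q = (SOME U. U \<in> Q \<and> x \<in> U)" for Q :: "'a set set"
  have pick: "pick Q \<in> Q \<and> x \<in> pick Q \<and> openin X (pick Q)" if "open_cover X Q" for Q
  proof -
    have "\<exists>U. U \<in> Q \<and> x \<in> U" using that x unfolding open_cover_def by auto
    then have "pick Q \<in> Q \<and> x \<in> pick Q" unfolding pick_def by (rule someI_ex)
    then show ?thesis using that unfolding open_cover_def by auto
  qed
  define f where "f U = (SOME \<sigma>. valid_st X \<sigma> \<and> (\<forall>\<O>. (\<forall>n. open_cover X (\<O> n)) \<longrightarrow>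
       A - U \<subseteq> (\<Union>n. \<sigma> (map \<O> [0..<Suc n]))))" for U
  have f: "valid_st X (f U) \<and> (\<forall>\<O>. (\<forall>n. open_cover X (\<O> n)) \<longrightarrow>
       A - U \<subseteq> (\<Union>n. f U (map \<O> [0..<Suc n])))" if "openin X U" "x \<in> U" for U
    using h[OF that] unfolding good_def f_def by (rule someI_ex)
  define \<sigma> where "\<sigma> os = (if length os = 1 then pick (hd os) else f (pick (hd os)) (tl os))" for os
  have "valid_st X \<sigma>" unfolding valid_st_def
  proof (intro allI impI)
    fix os :: "'a set set list" assume hh: "os \<noteq> [] \<and> (\<forall>C\<in>set os. open_cover X C)"
    then obtain Q rest where os: "os = Q # rest" by (cases os) auto
    have HQ: "open_cover X Q" using hh os by simp
    show "\<sigma> os \<in> last os"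
    proof (cases "rest = []")
      case True then show ?thesis using pick[OF HQ] os \<sigma>_def by simp
    next
      case False
      have "f (pick Q) rest \<in> last rest"
        using f[of "pick Q"] pick[OF HQ] hh os False unfolding valid_st_def by auto
      then show ?thesis using False os \<sigma>_def by simp
    qed
  qed
  moreover have "A \<subseteq> (\<Union>n. \<sigma> (map \<O> [0..<Suc n]))" if HO: "\<forall>n. open_cover X (\<O> n)" for \<O>
  proof
    fix y assume y: "y \<in> A"
    let ?U = "pick (\<O> 0)"
    have U: "?U \<in> \<O> 0 \<and> x \<in> ?U \<and> openin X ?U" using pick[of "\<O> 0"] HO by blast
    have s0: "\<sigma> (map \<O> [0..<Suc 0]) = ?U" by (simp add: \<sigma>_def)
    show "y \<in> (\<Union>n. \<sigma> (map \<O> [0..<Suc n]))"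
    proof (cases "y \<in> ?U")
      case True then have "y \<in> \<sigma> (map \<O> [0..<Suc 0])" using s0 by simp
      then show ?thesis by (rule UN_I[OF UNIV_I])
    next
      case False
      have "\<forall>n. open_cover X (\<O> (Suc n))" using HO by blast
      then have "A - ?U \<subseteq> (\<Union>n. f ?U (map (\<lambda>n. \<O> (Suc n)) [0..<Suc n]))"
        using f[of ?U] U by (auto dest: spec[where x="\<lambda>n. \<O> (Suc n)"])
      then obtain n where n: "y \<in> f ?U (map (\<lambda>n. \<O> (Suc n)) [0..<Suc n])"
        using y False by blast
      have "map \<O> [0..<Suc (Suc n)] = \<O> 0 # map (\<lambda>n. \<O> (Suc n)) [0..<Suc n]"
        by (rule map_upt_shift)
      then have "\<sigma> (map \<O> [0..<Suc (Suc n)]) = f ?U (map (\<lambda>n. \<O> (Suc n)) [0..<Suc n])"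
        unfolding \<sigma>_def by (simp del: upt_Suc)
      with n have "y \<in> \<sigma> (map \<O> [0..<Suc (Suc n)])" by (simp del: upt_Suc)
      then show ?thesis by (rule UN_I[OF UNIV_I])
    qed
  qed
  ultimately show ?thesis unfolding good_def by blast
qed


lemma good_compact_cover:
  assumes ne: "topspace X \<noteq> {}" and C: "compactin X C"
    and h: "\<And>x. x \<in> C \<Longrightarrow> \<exists>W. openin X W \<and> x \<in> W \<and> good X (C \<inter> W)"
  shows "good X C"
proof -
  let ?U = "{W. openin X W \<and> good X (C \<inter> W)}"
  have "C \<subseteq> \<Union>?U" using h by blast
  then obtain F where F: "finite F" "F \<subseteq> ?U" "C \<subseteq> \<Union>F"
    using C unfolding compactin_def by (metis (no_types, lifting) mem_Collect_eq)
  have "good X (\<Union>((\<lambda>W. C \<inter> W) ` F))"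
    by (rule good_finite_Union[OF ne]) (use F in auto)
  moreover have "C \<subseteq> \<Union>((\<lambda>W. C \<inter> W) ` F)" using F by blast
  ultimately show ?thesis by (rule good_mono)
qed

lemma nested_compact:
  assumes "\<And>n. compactin X (E n)" "\<And>n. E n \<noteq> {}" "\<And>n. E (Suc n) \<subseteq> E n"
    and H: "Hausdorff_space X"
  shows "\<exists>x. \<forall>n. x \<in> E n"
proof (rule ccontr)
  assume "\<not> ?thesis"
  then have cov: "E 0 \<subseteq> \<Union>(range (\<lambda>n. topspace X - E n))" using assms(1)[of 0]
    by (auto dest: compactin_subset_topspace)
  have "\<forall>U \<in> range (\<lambda>n. topspace X - E n). openin X U"
    using compactin_imp_closedin[OF H assms(1)] by auto
  then obtain F where F: "finite F" "F \<subseteq> range (\<lambda>n. topspace X - E n)" "E 0 \<subseteq> \<Union>F"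
    using assms(1)[of 0] cov unfolding compactin_def by meson
  then obtain N where N: "finite N" "F = (\<lambda>n. topspace X - E n) ` N"
    by (meson finite_subset_image)
  define m where "m = Max (insert 0 N)"
  have dec: "E j \<subseteq> E i" if "i \<le> j" for i j
    using that by (induction rule: dec_induct) (use assms(3) in auto)
  have "E m \<subseteq> E n" if "n \<in> N" for n using N that dec m_def by simp
  moreover have "E m \<subseteq> E 0" using dec by simp
  ultimately have "E m = {}" using F N by blast
  then show False using assms(2) by blast
qed


lemma compactin_diff_open:
  "compactin X K \<Longrightarrow> openin X W \<Longrightarrow> compactin X (K - W)"
proof -
  assume K: "compactin X K" and W: "openin X W"
  have "closedin X (topspace X - W)" using W by blast
  then have "compactin X ((topspace X - W) \<inter> K)" using K by (rule closed_Int_compactin)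
  moreover have "(topspace X - W) \<inter> K = K - W" using compactin_subset_topspace[OF K] by blast
  ultimately show ?thesis by simp
qed

lemma sep_point_compact:
  assumes H: "Hausdorff_space X" and K: "compactin X K" and x: "x \<in> topspace X" "x \<notin> K"
  obtains U G where "openin X U" "openin X G" "x \<in> U" "K \<subseteq> G" "U \<inter> G = {}"
proof -
  have "compactin X {x}" using x by simp
  moreover have "disjnt {x} K" using x by simp
  ultimately obtain U G where "openin X U" "openin X G" "{x} \<subseteq> U" "K \<subseteq> G" "disjnt U G"
    using Hausdorff_space_compact_separation[OF H _ K] by metis
  then show ?thesis using that by (auto simp: disjnt_def)
qed

lemma crowded_false:
  assumes H: "Hausdorff_space X" and S: "S1_OO X" and B: "compactin X B" and Bne: "B \<noteq> {}"
    and cr: "\<And>x W. x \<in> B \<Longrightarrow> openin X W \<Longrightarrow> x \<in> W \<Longrightarrow> \<exists>y\<in>B. y \<in> W \<and> y \<noteq> x"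
  shows False
proof -
  have BX: "B \<subseteq> topspace X" using B by (rule compactin_subset_topspace)
  have shrink: "\<exists>V D. openin X V \<and> x \<in> V \<and> compactin X D \<and> B \<inter> V \<subseteq> D \<and> D \<subseteq> B \<inter> W"
    if x: "x \<in> B" and W: "openin X W" "x \<in> W" for x W
  proof -
    have c: "compactin X (B - W)" using B W(1) by (rule compactin_diff_open)
    obtain U G where UG: "openin X U" "openin X G" "x \<in> U" "B - W \<subseteq> G" "U \<inter> G = {}"
      using sep_point_compact[OF H c] x W BX by blast
    have "compactin X (B - G)" using B UG(2) by (rule compactin_diff_open)
    moreover have "B \<inter> U \<subseteq> B - G" "B - G \<subseteq> B \<inter> W" using UG by auto
    ultimately show ?thesis using UG by blast
  qed
  define inv where "inv N \<longleftrightarrow> openin X (fst N) \<and> compactin X (snd N) \<and> snd N \<subseteq> B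
      \<and> B \<inter> fst N \<subseteq> snd N \<and> B \<inter> fst N \<noteq> {}" for N :: "'a set \<times> 'a set"
  have split: "\<exists>p. inv (fst p) \<and> inv (snd p) \<and> snd (fst p) \<subseteq> snd N \<and> snd (snd p) \<subseteq> snd N
      \<and> snd (fst p) \<inter> snd (snd p) = {}" if N: "inv N" for N
  proof -
    obtain a where a: "a \<in> B" "a \<in> fst N" using N unfolding inv_def by blast
    obtain b where b: "b \<in> B" "b \<in> fst N" "b \<noteq> a" using cr[OF a(1) _ a(2)] N unfolding inv_def by blast
    obtain Pa Pb where P: "openin X Pa" "openin X Pb" "a \<in> Pa" "b \<in> Pb" "disjnt Pa Pb"
      using H a b BX unfolding Hausdorff_space_def by (metis subsetD)
    obtain V0 D0 where 0: "openin X V0" "a \<in> V0" "compactin X D0" "B \<inter> V0 \<subseteq> D0" "D0 \<subseteq> B \<inter> (fst N \<inter> Pa)"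
      using shrink[OF a(1), of "fst N \<inter> Pa"] N P a unfolding inv_def by blast
    obtain V1 D1 where 1: "openin X V1" "b \<in> V1" "compactin X D1" "B \<inter> V1 \<subseteq> D1" "D1 \<subseteq> B \<inter> (fst N \<inter> Pb)"
      using shrink[OF b(1), of "fst N \<inter> Pb"] N P b unfolding inv_def by blast
    have "inv (V0, D0)" "inv (V1, D1)" using 0 1 a b unfolding inv_def by auto
    moreover have "D0 \<subseteq> snd N" "D1 \<subseteq> snd N" using 0 1 N unfolding inv_def by auto
    moreover have "D0 \<inter> D1 = {}" using 0 1 P(5) by (auto simp: disjnt_def)
    ultimately show ?thesis by (intro exI[of _ "((V0,D0),(V1,D1))"]) simp
  qed
  define spl where "spl N = (SOME p. inv (fst p) \<and> inv (snd p) \<and> snd (fst p) \<subseteq> snd N \<and> snd (snd p) \<subseteq> snd N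
      \<and> snd (fst p) \<inter> snd (snd p) = {})" for N :: "'a set \<times> 'a set"
  have spl: "inv (fst (spl N)) \<and> inv (snd (spl N)) \<and> snd (fst (spl N)) \<subseteq> snd N \<and> snd (snd (spl N)) \<subseteq> snd N
      \<and> snd (fst (spl N)) \<inter> snd (snd (spl N)) = {}" if "inv N" for N
    unfolding spl_def using split[OF that] by (rule someI_ex)
  define T where "T s = foldr (\<lambda>i N. (if i then snd else fst) (spl N)) s (topspace X, B)" for s
  have T_Cons: "T (i # s) = (if i then snd else fst) (spl (T s))" for i s by (simp add: T_def)
  have T_inv: "inv (T s)" for s
  proof (induction s)
    case Nil
    have "T [] = (topspace X, B)" by (simp add: T_def)
    then show ?case using B BX Bne unfolding inv_def by auto
  next
    case (Cons i s)
    then show ?case using spl[OF Cons] unfolding T_Cons by (cases i) auto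
  qed
  define D where "D s = snd (T s)" for s
  have D_Cons: "D (i # s) \<subseteq> D s" for i s
    using spl[OF T_inv[of s]] unfolding D_def T_Cons by (cases i) auto
  have D_comp: "compactin X (D s)" for s using T_inv[of s] unfolding inv_def D_def by blast
  have D_ne: "D s \<noteq> {}" for s using T_inv[of s] unfolding inv_def D_def by blast
  have D_B: "D s \<subseteq> B" for s using T_inv[of s] unfolding inv_def D_def by blast
  have D_disj: "D s \<inter> D t = {}" if "length s = length t" "s \<noteq> t" for s t
    using that
  proof (induction s arbitrary: t)
    case Nil then show ?case by (cases t) auto
  next
    case (Cons i s)
    obtain j t' where t: "t = j # t'" "length t' = length s" using Cons.prems(1) by (cases t) auto
    show ?case
    proof (cases "s = t'")
      case True
      then have ij: "i \<noteq> j" using Cons.prems(2) t(1) by simp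
      have dd: "D (False # s) \<inter> D (True # s) = {}"
        using conjunct2[OF conjunct2[OF conjunct2[OF conjunct2[OF spl[OF T_inv[of s]]]]]]
        unfolding D_def T_Cons by simp
      then have dd2: "D (True # s) \<inter> D (False # s) = {}" by (simp add: Int_commute)
      show ?thesis
      proof (cases i)
        case i: True
        then have "j = False" using ij by simp
        then show ?thesis using dd2 i t True by simp
      next
        case i: False
        then have "j = True" using ij by simp
        then show ?thesis using dd i t True by simp
      qed
    next
      case False
      then have "D s \<inter> D t' = {}" using Cons.IH[OF t(2)[symmetric] False] by simp
      then show ?thesis unfolding t(1) using D_Cons[of i s] D_Cons[of j t'] by blast
    qed
  qed
  have finL: "finite {s :: bool list. length s = n}" for n
    using finite_lists_length_eq[of "UNIV :: bool set" n] by simp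
  define Y where "Y n i = topspace X - \<Union>((\<lambda>s. D (i # s)) ` {s. length s = n})" for n i
  define \<U> where "\<U> n = {Y n False, Y n True}" for n
  have Yopen: "openin X (Y n i)" for n i
  proof -
    have "compactin X (\<Union>((\<lambda>s. D (i # s)) ` {s. length s = n}))"
      by (rule compactin_Union) (use finL D_comp in auto)
    then have "closedin X (\<Union>((\<lambda>s. D (i # s)) ` {s. length s = n}))"
      by (rule compactin_imp_closedin[OF H])
    then show ?thesis unfolding Y_def by (rule openin_diff[OF openin_topspace])
  qed
  have cov: "open_cover X (\<U> n)" for n
  proof -
    have "Y n False \<union> Y n True = topspace X"
    proof
      show "Y n False \<union> Y n True \<subseteq> topspace X" unfolding Y_def by blast
      show "topspace X \<subseteq> Y n False \<union> Y n True"
      proof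
        fix x assume x: "x \<in> topspace X"
        show "x \<in> Y n False \<union> Y n True"
        proof (rule ccontr)
          assume "x \<notin> Y n False \<union> Y n True"
          then obtain s t where "length s = n" "length t = n" "x \<in> D (False # s)" "x \<in> D (True # t)"
            using x unfolding Y_def by blast
          moreover have "D (False # s) \<inter> D (True # t) = {}" by (rule D_disj) (use calculation in auto)
          ultimately show False by blast
        qed
      qed
    qed
    then show ?thesis unfolding open_cover_def \<U>_def using Yopen by auto
  qed
  obtain U where U: "\<And>n. U n \<in> \<U> n" "open_cover X (range U)"
    using S cov unfolding S1_OO_def by meson
  define c where "c n = (SOME i. U n = Y n i)" for n
  have c: "U n = Y n (c n)" for n
  proof -
    have "\<exists>i. U n = Y n i" using U(1)[of n] unfolding \<U>_def by blast
    then show ?thesis unfolding c_def by (rule someI_ex)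
  qed
  define br where "br n = rev (map c [0..<n])" for n
  have br_Suc: "br (Suc n) = c n # br n" for n by (simp add: br_def)
  have br_len: "length (br n) = n" for n by (simp add: br_def)
  obtain x where x: "\<And>n. x \<in> D (br n)"
    using nested_compact[of X "\<lambda>n. D (br n)", OF D_comp D_ne _ H] D_Cons br_Suc by metis
  have "x \<in> topspace X" using x[of 0] D_B BX by blast
  then obtain n where "x \<in> U n" using U(2) unfolding open_cover_def by blast
  then have "x \<in> Y n (c n)" using c by simp
  moreover have "x \<in> D (c n # br n)" using x[of "Suc n"] br_Suc by simp
  ultimately show False unfolding Y_def using br_len by blast
qed


lemma good_compact:
  assumes H: "Hausdorff_space X" and S: "S1_OO X" and ne: "topspace X \<noteq> {}"
    and K: "compactin X K"
  shows "good X K"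
proof -
  have KX: "K \<subseteq> topspace X" using K by (rule compactin_subset_topspace)
  define G where "G = \<Union>{W. openin X W \<and> good X (K \<inter> W)}"
  define B where "B = K - G"
  have Gopen: "openin X G" unfolding G_def by (rule openin_Union) blast
  have Bcomp: "compactin X B" unfolding B_def using K Gopen by (rule compactin_diff_open)
  have loc: "good X C" if C: "compactin X C" "C \<subseteq> K" "C \<inter> B = {}" for C
  proof (rule good_compact_cover[OF ne C(1)])
    fix x assume x: "x \<in> C"
    then have "x \<in> G" using C unfolding B_def by blast
    then obtain W where W: "openin X W" "good X (K \<inter> W)" "x \<in> W" unfolding G_def by blast
    have "good X (C \<inter> W)" using W(2) by (rule good_mono) (use C in blast)
    then show "\<exists>W. openin X W \<and> x \<in> W \<and> good X (C \<inter> W)" using W by blast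
  qed
  show ?thesis
  proof (cases "B = {}")
    case True then show ?thesis using loc[OF K] by simp
  next
    case False
    have cr: "\<exists>y\<in>B. y \<in> W \<and> y \<noteq> x" if x: "x \<in> B" and W: "openin X W" "x \<in> W" for x W
    proof (rule ccontr)
      assume "\<not> (\<exists>y\<in>B. y \<in> W \<and> y \<noteq> x)"
      then have BW: "B \<inter> W \<subseteq> {x}" by blast
      have xK: "x \<in> K" "x \<notin> G" using x unfolding B_def by auto
      have xX: "x \<in> topspace X" using xK KX by blast
      have c: "compactin X (K - W)" using K W(1) by (rule compactin_diff_open)
      obtain U0 G0 where UG: "openin X U0" "openin X G0" "x \<in> U0" "K - W \<subseteq> G0" "U0 \<inter> G0 = {}"
        using sep_point_compact[OF H c xX] W(2) by blast
      have "good X (K \<inter> U0)"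
      proof (rule good_step[OF xX])
        fix U assume U: "openin X U" "x \<in> U"
        have "openin X (G0 \<union> U)" using UG(2) U(1) by blast
        then have Cc: "compactin X (K - (G0 \<union> U))" using K by (intro compactin_diff_open)
        have "(K - (G0 \<union> U)) \<inter> B = {}"
        proof (rule ccontr)
          assume "(K - (G0 \<union> U)) \<inter> B \<noteq> {}"
          then obtain y where y: "y \<in> K" "y \<notin> G0" "y \<notin> U" "y \<in> B" by blast
          then have "y \<in> W" using UG(4) by blast
          then have "y \<in> {x}" using BW y(4) by blast
          then have "y = x" by simp
          then show False using y(3) U(2) by simp
        qed
        then have "good X (K - (G0 \<union> U))" using loc[OF Cc] by blast
        moreover have "K \<inter> U0 - U \<subseteq> K - (G0 \<union> U)" using UG(5) by blast
        ultimately show "good X (K \<inter> U0 - U)" by (rule good_mono)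
      qed
      then have "x \<in> G" unfolding G_def using UG(1,3) by blast
      then show False using xK by simp
    qed
    show ?thesis using crowded_false[OF H S Bcomp False cr] by simp
  qed
qed


theorem theorem8p5:
  fixes X :: "'a topology"
  assumes "Hausdorff_space X" and "sigma_compact_space X"
  shows "S1_OO X \<longleftrightarrow> TWO_has_winning_strategy_G1_OO X"
proof
  assume S: "S1_OO X"
  have ne: "topspace X \<noteq> {}"
  proof
    assume e: "topspace X = {}"
    have "\<forall>n. open_cover X ((\<lambda>n. {}) n)" using e unfolding open_cover_def by simp
    then obtain U :: "nat \<Rightarrow> 'a set" where "\<forall>n. U n \<in> (\<lambda>n. {}) n"
      using S[unfolded S1_OO_def, rule_format, of "\<lambda>n. {}"] by blast
    then show False by blast
  qed
  obtain K :: "nat \<Rightarrow> 'a set" where K: "\<And>n. compactin X (K n)" "(\<Union>n. K n) = topspace X"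
    using assms(2) unfolding sigma_compact_space_def by blast
  have "good X (\<Union>n. K n)"
    by (rule good_Union) (rule good_compact[OF assms(1) S ne K(1)])
  then obtain \<sigma> where \<sigma>: "valid_st X \<sigma>"
    "\<And>\<O>. (\<forall>n. open_cover X (\<O> n)) \<Longrightarrow> topspace X \<subseteq> (\<Union>n. \<sigma> (map \<O> [0..<Suc n]))"
    unfolding good_def K(2) by blast
  have "TWO_winning_G1_OO X \<sigma>" unfolding TWO_winning_G1_OO_def
  proof (intro conjI allI impI)
    show "TWO_strategy_G1_OO X \<sigma>" using \<sigma>(1) unfolding valid_st_def TWO_strategy_G1_OO_def .
    fix \<O> :: "nat \<Rightarrow> 'a set set" assume O: "\<forall>n. open_cover X (\<O> n)"
    have "\<sigma> (map \<O> [0..<Suc n]) \<subseteq> topspace X" for n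
    proof -
      have "\<sigma> (map \<O> [0..<Suc n]) \<in> last (map \<O> [0..<Suc n])"
        using \<sigma>(1)[unfolded valid_st_def, rule_format, of "map \<O> [0..<Suc n]"] O
        by (simp del: upt_Suc)
      then have "\<sigma> (map \<O> [0..<Suc n]) \<in> \<O> n" by simp
      then show ?thesis using O unfolding open_cover_def by blast
    qed
    then show "(\<Union>n. \<sigma> (map \<O> [0..<Suc n])) = topspace X" using \<sigma>(2)[OF O] by blast
  qed
  then show "TWO_has_winning_strategy_G1_OO X" unfolding TWO_has_winning_strategy_G1_OO_def by blast
next
  assume "TWO_has_winning_strategy_G1_OO X"
  then obtain \<sigma> where \<sigma>: "TWO_winning_G1_OO X \<sigma>" unfolding TWO_has_winning_strategy_G1_OO_def by blast
  show "S1_OO X" unfolding S1_OO_def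
  proof (intro allI impI)
    fix \<U> :: "nat \<Rightarrow> 'a set set" assume U: "\<forall>n. open_cover X (\<U> n)"
    define V where "V n = \<sigma> (map \<U> [0..<Suc n])" for n
    have V: "V n \<in> \<U> n" for n
    proof -
      have "\<sigma> (map \<U> [0..<Suc n]) \<in> last (map \<U> [0..<Suc n])"
        using \<sigma>[unfolded TWO_winning_G1_OO_def TWO_strategy_G1_OO_def] U
        by (simp del: upt_Suc)
      then show ?thesis unfolding V_def by simp
    qed
    have "open_cover X (range V)" unfolding open_cover_def
    proof
      show "\<forall>W\<in>range V. openin X W" using V U unfolding open_cover_def by blast
      show "\<Union>(range V) = topspace X" using \<sigma> U unfolding TWO_winning_G1_OO_def V_def by blast
    qed
    then show "\<exists>U. (\<forall>n. U n \<in> \<U> n) \<and> open_cover X (range U)" using V by blast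
  qed
qed

end
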